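(* Let $G=(g_{ij})$ be a Hermitian $4\times4$ matrix with $g_{ii}=0$, $g_{12}=g_{23}=g_{34}=1$, $|g_{13}|=1$, $g_{14}\ne0$, $g_{24}\ne0$. Then $G$ is the normalized Gram matrix of some ordered quadruple of distinct points of $\partial\mathbf H^2_{\mathbb C}$ if and only if $\mathrm{Re}(g_{13})\le0$, $\mathrm{Re}(g_{24}\overline{g}_{14})\le0$ and $\det G=0$.
   Context: $\mathbb C^{2,1}$ is $\mathbb C^3$ with the Hermitian form $\langle Z,W\rangle=z_1\overline{w}_3+z_2\overline{w}_2+z_3\overline{w}_1$; $\partial\mathbf H^2_{\mathbb C}$ is the set of null lines in $\mathbb P\mathbb C^2$. For a quadruple of boundary points with null lifts $P_i$, a Gram matrix is $(\langle P_i,P_j\rangle)$; the normalized Gram matrix is the unique Gram matrix (for suitable lifts) with $g_{ii}=0$, $g_{12}=g_{23}=g_{34}=1$, $|g_{13}|=1$. *)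

theory Defs
  imports "HOL-Analysis.Analysis" "HOL-Library.Numeral_Type"
begin

text \<open>Vectors of C^{2,1} are elements of complex^3 with indices 1,2,3 (in the numeral
  type 3 the literal 3 equals 0, distinct from 1 and 2).  Quadruples are indexed
  by the numeral type 4 with indices 1,2,3,4 (where 4 = 0 in that type).\<close>

definition hform :: "complex^3 \<Rightarrow> complex^3 \<Rightarrow> complex" where
  "hform Z W = Z$1 * cnj (W$3) + Z$2 * cnj (W$2) + Z$3 * cnj (W$1)"

text \<open>A lift of a boundary point of complex hyperbolic 2-space: a nonzero null vector.\<close>
definition null_lift :: "complex^3 \<Rightarrow> bool" where
  "null_lift P \<longleftrightarrow> P \<noteq> 0 \<and> hform P P = 0"

definition same_point :: "complex^3 \<Rightarrow> complex^3 \<Rightarrow> bool" where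
  "same_point P Q \<longleftrightarrow> (\<exists>c::complex. P = c *s Q)"

definition distinct_boundary_quadruple :: "(4 \<Rightarrow> complex^3) \<Rightarrow> bool" where
  "distinct_boundary_quadruple P \<longleftrightarrow>
     (\<forall>i. null_lift (P i)) \<and> (\<forall>i j. i \<noteq> j \<longrightarrow> \<not> same_point (P i) (P j))"

definition gram_matrix :: "(4 \<Rightarrow> complex^3) \<Rightarrow> complex^4^4" where
  "gram_matrix P = (\<chi> i j. hform (P i) (P j))"

definition normalized :: "complex^4^4 \<Rightarrow> bool" where
  "normalized G \<longleftrightarrow> (\<forall>i. G$i$i = 0) \<and> G$1$2 = 1 \<and> G$2$3 = 1 \<and> G$3$4 = 1
     \<and> cmod (G$1$3) = 1"

definition is_normalized_gram_of :: "complex^4^4 \<Rightarrow> (4 \<Rightarrow> complex^3) \<Rightarrow> bool" where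
  "is_normalized_gram_of G P \<longleftrightarrow> normalized G \<and>
     (\<exists>Q. (\<forall>i. Q i \<noteq> 0 \<and> same_point (Q i) (P i)) \<and> gram_matrix Q = G)"

definition hermitian4 :: "complex^4^4 \<Rightarrow> bool" where
  "hermitian4 G \<longleftrightarrow> (\<forall>i j. G$i$j = cnj (G$j$i))"

end

theory Submission
  imports Defs
begin

lemma hform_cnj: "hform B A = cnj (hform A B)"
  by (simp add: hform_def algebra_simps)

lemma hform_scale: "hform (c *s A) B = c * hform A B"
  by (simp add: hform_def algebra_simps)

lemma not_same_point:
  assumes "hform B B = 0" "hform A B \<noteq> 0"
  shows "\<not> same_point A B"
  using assms by (auto simp: same_point_def hform_scale)

lemma gram3:
  fixes A B C :: "complex^3"
  shows "hform A A * hform B B * hform C C + hform A B * hform B C * hform C A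
       + hform A C * hform B A * hform C B - hform A A * hform B C * hform C B
       - hform A B * hform B A * hform C C - hform A C * hform B B * hform C A
     = - ((A$1*B$2*C$3 + A$2*B$3*C$1 + A$3*B$1*C$2 - A$1*B$3*C$2 - A$2*B$1*C$3 - A$3*B$2*C$1)
        * cnj (A$1*B$2*C$3 + A$2*B$3*C$1 + A$3*B$1*C$2 - A$1*B$3*C$2 - A$2*B$1*C$3 - A$3*B$2*C$1))"
  by (simp add: hform_def algebra_simps)

lemma gram3_le:
  fixes A B C :: "complex^3"
  assumes "hform A A = 0" "hform B B = 0" "hform C C = 0"
  shows "Re (hform A B * hform B C * hform C A + hform A C * hform B A * hform C B) \<le> 0"
proof -
  define d where "d = A$1*B$2*C$3 + A$2*B$3*C$1 + A$3*B$1*C$2 - A$1*B$3*C$2 - A$2*B$1*C$3 - A$3*B$2*C$1"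
  have "hform A B * hform B C * hform C A + hform A C * hform B A * hform C B = - (d * cnj d)"
    using gram3[of A B C] assms unfolding d_def by simp
  also have "\<dots> = - complex_of_real ((Re d)\<^sup>2 + (Im d)\<^sup>2)" by (simp add: complex_mult_cnj)
  finally show ?thesis by simp
qed

lemma gram_det0:
  fixes Q :: "4 \<Rightarrow> complex^3"
  shows "det (gram_matrix Q) = 0"
proof -
  define X :: "complex^4^4" where "X = (\<chi> i k. if k = 1 then Q i$1 else if k = 2 then Q i$2
     else if k = 3 then Q i$3 else 0)"
  define Y :: "complex^4^4" where "Y = (\<chi> k j. if k = 1 then cnj (Q j$3) else if k = 2 then cnj (Q j$2)
     else if k = 3 then cnj (Q j$1) else 0)"
  have "gram_matrix Q = X ** Y"
    by (simp add: vec_eq_iff gram_matrix_def matrix_matrix_mult_def sum_4 X_def Y_def hform_def)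
  moreover have "column 4 X = 0"
    by (simp add: vec_eq_iff column_def X_def)
  then have "det X = 0" by (rule det_zero_column)
  ultimately show ?thesis by (simp add: det_mul)
qed


lemma detG:
  fixes G :: "complex^4^4"
  assumes "G$1$1 = 0" "G$2$2 = 0" "G$3$3 = 0" "G$4$4 = 0"
    "G$1$2 = 1" "G$2$1 = 1" "G$2$3 = 1" "G$3$2 = 1" "G$3$4 = 1" "G$4$3 = 1"
    "G$1$3 = a" "G$3$1 = cnj a" "G$1$4 = p" "G$4$1 = cnj p" "G$2$4 = q" "G$4$2 = cnj q"
  shows "det G = (1 - p - cnj a * q) * cnj (1 - p - cnj a * q) - (a + cnj a) * (q * cnj p + p * cnj q)"
proof -
  have f1: "finite {2::4, 3, 4}" "1 \<notin> {2::4, 3, 4}" by auto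
  have f2: "finite {3::4, 4}" "2 \<notin> {3::4, 4}" by auto
  have f3: "finite {4::4}" "3 \<notin> {4::4}" by auto
  show ?thesis
    unfolding det_def UNIV_4
    unfolding sum_over_permutations_insert[OF f1]
    unfolding sum_over_permutations_insert[OF f2]
    unfolding sum_over_permutations_insert[OF f3]
    unfolding permutes_sing
    apply (simp add: sign_swap_id permutation_swap_id sign_compose permutation_compose swap_id_eq assms)
    apply (simp add: algebra_simps)
    done
qed

theorem proposition3p1:
  fixes G :: "complex^4^4"
  assumes "hermitian4 G"
    and "\<forall>i. G$i$i = 0"
    and "G$1$2 = 1" and "G$2$3 = 1" and "G$3$4 = 1"
    and "cmod (G$1$3) = 1"
    and "G$1$4 \<noteq> 0" and "G$2$4 \<noteq> 0"
  shows "(\<exists>P. distinct_boundary_quadruple P \<and> is_normalized_gram_of G P) \<longleftrightarrow>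
         (Re (G$1$3) \<le> 0 \<and> Re (G$2$4 * cnj (G$1$4)) \<le> 0 \<and> det G = 0)"
proof -
  define a where "a = G$1$3"
  define p where "p = G$1$4"
  define q where "q = G$2$4"
  have H: "\<And>i j. G$i$j = cnj (G$j$i)" using assms(1) unfolding hermitian4_def by blast
  have E: "G$1$1 = 0" "G$2$2 = 0" "G$3$3 = 0" "G$4$4 = 0"
    "G$1$2 = 1" "G$2$1 = 1" "G$2$3 = 1" "G$3$2 = 1" "G$3$4 = 1" "G$4$3 = 1"
    "G$1$3 = a" "G$3$1 = cnj a" "G$1$4 = p" "G$4$1 = cnj p" "G$2$4 = q" "G$4$2 = cnj q"
    using assms(2-5) H[of 2 1] H[of 3 2] H[of 4 3] H[of 3 1] H[of 4 1] H[of 4 2]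
    by (auto simp: a_def p_def q_def)
  have anz: "a \<noteq> 0" using assms(6) a_def by auto
  have pnz: "p \<noteq> 0" "q \<noteq> 0" using assms(7,8) p_def q_def by auto
  have nz: "\<forall>i j. i \<noteq> j \<longrightarrow> G$i$j \<noteq> 0"
    unfolding forall_4 using E anz pnz by auto
  have norm: "normalized G" using assms(2-6) by (simp add: normalized_def)
  show ?thesis
  proof
    assume "\<exists>P. distinct_boundary_quadruple P \<and> is_normalized_gram_of G P"
    then obtain Q where Q: "gram_matrix Q = G"
      by (auto simp: is_normalized_gram_of_def)
    have h: "\<And>i j. hform (Q i) (Q j) = G$i$j"
      using Q by (auto simp: gram_matrix_def)
    have "Re (hform (Q 1) (Q 2) * hform (Q 2) (Q 3) * hform (Q 3) (Q 1)
         + hform (Q 1) (Q 3) * hform (Q 2) (Q 1) * hform (Q 3) (Q 2)) \<le> 0"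
      by (rule gram3_le) (simp_all add: h E)
    then have r1: "Re a \<le> 0" by (simp add: h E)
    have "Re (hform (Q 1) (Q 2) * hform (Q 2) (Q 4) * hform (Q 4) (Q 1)
         + hform (Q 1) (Q 4) * hform (Q 2) (Q 1) * hform (Q 4) (Q 2)) \<le> 0"
      by (rule gram3_le) (simp_all add: h E)
    then have r2: "Re (q * cnj p) \<le> 0" by (simp add: h E mult.commute)
    have "det G = 0" using gram_det0[of Q] Q by simp
    then show "Re (G$1$3) \<le> 0 \<and> Re (G$2$4 * cnj (G$1$4)) \<le> 0 \<and> det G = 0"
      using r1 r2 by (simp add: a_def p_def q_def)
  next
    assume "Re (G$1$3) \<le> 0 \<and> Re (G$2$4 * cnj (G$1$4)) \<le> 0 \<and> det G = 0"
    then have ra: "Re a \<le> 0" and rqp: "Re (q * cnj p) \<le> 0" and dG: "det G = 0"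
      by (auto simp: a_def p_def q_def)
    define w where "w = 1 - p - cnj a * q"
    define S where "S = q * cnj p + p * cnj q"
    have S: "S = complex_of_real (2 * Re (q * cnj p))"
      unfolding S_def using complex_add_cnj[of "q * cnj p"] by (simp add: mult.commute)
    have W: "w * cnj w = (a + cnj a) * S"
      using detG[OF E] dG by (simp add: w_def S_def)
    define r where "r = sqrt (- 2 * Re a)"
    define b where "b = complex_of_real r"
    define y where "y = (if Re a = 0 then complex_of_real (sqrt (- 2 * Re (q * cnj p))) else cnj w / b)"
    have rr: "r * r = - 2 * Re a" using ra by (simp add: r_def)
    have K0: "b * cnj b = - (a + cnj a)"
    proof -
      have "b * cnj b = complex_of_real (r * r)" by (simp add: b_def)
      also have "\<dots> = - (a + cnj a)" unfolding rr complex_add_cnj by simp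
      finally show ?thesis .
    qed
    have K1: "b * cnj y = w \<and> y * cnj y = - S"
    proof (cases "Re a = 0")
      case True
      then have "a + cnj a = 0" by (simp add: complex_add_cnj)
      then have "w = 0" using W by simp
      moreover have "b = 0" using True by (simp add: b_def r_def)
      moreover have "y * cnj y = - S"
      proof -
        define s where "s = sqrt (- 2 * Re (q * cnj p))"
        have ss: "s * s = - 2 * Re (q * cnj p)" using rqp by (simp add: s_def)
        have "y = complex_of_real s" using True by (simp add: y_def s_def)
        then have "y * cnj y = complex_of_real (s * s)" by simp
        also have "\<dots> = - S" unfolding ss S by simp
        finally show ?thesis .
      qed
      ultimately show ?thesis by simp
    next
      case False
      then have rp: "r > 0" using ra by (simp add: r_def)
      have bb: "b * b = - (a + cnj a)" using K0 by (simp add: b_def)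
      have bnz: "b \<noteq> 0" using rp by (simp add: b_def)
      have "b * cnj y = w" using False bnz by (simp add: y_def b_def)
      moreover have "y * cnj y = - S"
      proof -
        have "y * cnj y = (w * cnj w) / (b * b)" using False by (simp add: y_def b_def)
        also have "\<dots> = - S"
        proof -
          have an: "a + cnj a \<noteq> 0"
          proof
            assume "a + cnj a = 0"
            then have "b * b = 0" using bb by simp
            then show False using bnz by simp
          qed
          show ?thesis unfolding W bb divide_minus_right using an by simp
        qed
        finally show ?thesis .
      qed
      ultimately show ?thesis by simp
    qed
    define Q1 :: "complex^3" where "Q1 = (\<chi> k. if k = 1 then 1 else 0)"
    define Q2 :: "complex^3" where "Q2 = (\<chi> k. if k = 3 then 1 else 0)"
    define Q3 :: "complex^3" where "Q3 = (\<chi> k. if k = 1 then 1 else if k = 2 then b else cnj a)"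
    define Q4 :: "complex^3" where "Q4 = (\<chi> k. if k = 1 then cnj q else if k = 2 then y else cnj p)"
    define Q :: "4 \<Rightarrow> complex^3" where
      "Q = (\<lambda>i. if i = 1 then Q1 else if i = 2 then Q2 else if i = 3 then Q3 else Q4)"
    have Qv: "Q 1 = Q1" "Q 2 = Q2" "Q 3 = Q3" "Q 4 = Q4" by (simp_all add: Q_def)
    have u: "hform Q1 Q1 = G$1$1" "hform Q1 Q2 = G$1$2" "hform Q1 Q3 = G$1$3" "hform Q1 Q4 = G$1$4"
      "hform Q2 Q2 = G$2$2" "hform Q2 Q3 = G$2$3" "hform Q2 Q4 = G$2$4"
      "hform Q3 Q3 = G$3$3" "hform Q3 Q4 = G$3$4" "hform Q4 Q4 = G$4$4"
      using K0 K1 unfolding E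
      by (simp_all add: hform_def Q1_def Q2_def Q3_def Q4_def w_def S_def algebra_simps)
    define U :: "(4 \<times> 4) set" where
      "U = {(1,1),(1,2),(1,3),(1,4),(2,2),(2,3),(2,4),(3,3),(3,4),(4,4)}"
    have up: "hform (Q i) (Q j) = G$i$j" if "(i,j) \<in> U" for i j
      using that u unfolding U_def by (auto simp: Qv)
    have hQ: "hform (Q i) (Q j) = G$i$j" for i j
    proof (cases "(i,j) \<in> U")
      case True then show ?thesis by (rule up)
    next
      case False
      then have "(j,i) \<in> U" using exhaust_4[of i] exhaust_4[of j] unfolding U_def by auto
      then have "hform (Q j) (Q i) = G$j$i" by (rule up)
      then show ?thesis using hform_cnj[of "Q i" "Q j"] H[of i j] by simp
    qed
    have gQ: "gram_matrix Q = G" by (simp add: vec_eq_iff gram_matrix_def hQ)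
    have Qnz: "Q i \<noteq> 0" for i
    proof
      define j :: 4 where "j = (if i = 1 then 2 else 1)"
      have ij: "i \<noteq> j" by (simp add: j_def)
      assume "Q i = 0"
      then have "hform (Q i) (Q j) = 0" by (simp add: hform_def)
      then show False using nz ij hQ by simp
    qed
    have nl: "\<forall>i. null_lift (Q i)" using Qnz hQ assms(2) by (simp add: null_lift_def)
    have sp: "\<forall>i j. i \<noteq> j \<longrightarrow> \<not> same_point (Q i) (Q j)"
    proof (intro allI impI)
      fix i j :: 4
      assume ij: "i \<noteq> j"
      show "\<not> same_point (Q i) (Q j)"
        by (rule not_same_point) (simp_all add: hQ assms(2) nz ij)
    qed
    have "distinct_boundary_quadruple Q"
      unfolding distinct_boundary_quadruple_def using nl sp by blast
    moreover have "is_normalized_gram_of G Q"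
    proof -
      have "same_point (Q i) (Q i)" for i
        unfolding same_point_def by (metis vector_smult_lid)
      then show ?thesis unfolding is_normalized_gram_of_def using norm Qnz gQ by (intro conjI exI[of _ Q]) blast+
    qed
    ultimately show "\<exists>P. distinct_boundary_quadruple P \<and> is_normalized_gram_of G P" by blast
  qed
qed

end
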